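(* Let $\mathcal{H}$ be a complex Hilbert space, $A\in\mathcal{B}(\mathcal{H})$ positive and $S\in\mathcal{B}_A(\mathcal{H})$. Then $$d\omega_A^2(S)\le\|S\|_A^4+2\|S\|_A^2-\sqrt{c_A\left(S^{\sharp_A}S\right)c_A\left(SS^{\sharp_A}\right)}.$$
   Context: $\mathcal{B}(\mathcal{H})$ denotes the bounded linear operators on $\mathcal{H}$. For positive $A$, $\langle x,z\rangle_A=\langle Ax,z\rangle$ and $\|z\|_A=\|A^{1/2}z\|$. $\mathcal{B}_A(\mathcal{H})$ is the set of $S\in\mathcal{B}(\mathcal{H})$ for which some $R\in\mathcal{B}(\mathcal{H})$ satisfies $AR=S^*A$; for such $S$, $S^{\sharp_A}=A^{\dagger}S^*A$ with $A^\dagger$ the Moore–Penrose inverse of $A$. For operators $T$ bounded with respect to $\|\cdot\|_A$: $\|T\|_A=\sup_{\|z\|_A=1}\|Tz\|_A$, $c_A(T)=\inf_{\|z\|_A=1}|\langle Tz,z\rangle_A|$ ($A$-Crawford number), and $d\omega_A(T)=\sup_{\|z\|_A=1}(|\langle Tz,z\rangle_A|^2+\|Tz\|_A^4)^{1/2}$. *)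

theory Defs
  imports "HOL-Analysis.Analysis"
begin

text \<open>HOL-Analysis has no complex inner product spaces, so we introduce a type class
of complex Hilbert spaces: a complete normed space with a complex scalar multiplication
(compatible with the real one) and a complex inner product, linear in the first argument,
conjugate symmetric, and inducing the norm.\<close>

class chilbert = real_normed_vector + complete_space +
  fixes scaleC :: "complex \<Rightarrow> 'a \<Rightarrow> 'a"
    and cinner :: "'a \<Rightarrow> 'a \<Rightarrow> complex"
  assumes scaleC_add_right: "scaleC c (x + y) = scaleC c x + scaleC c y"
    and scaleC_add_left: "scaleC (c + d) x = scaleC c x + scaleC d x"
    and scaleC_scaleC: "scaleC c (scaleC d x) = scaleC (c * d) x"
    and scaleC_one: "scaleC 1 x = x"
    and scaleR_scaleC: "scaleR r x = scaleC (complex_of_real r) x"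
    and norm_scaleC: "norm (scaleC c x) = cmod c * norm x"
    and cinner_add_left: "cinner (x + y) z = cinner x z + cinner y z"
    and cinner_scaleC_left: "cinner (scaleC c x) z = c * cinner x z"
    and cinner_commute: "cinner x y = cnj (cinner y x)"
    and cinner_self_norm: "cinner x x = complex_of_real ((norm x)\<^sup>2)"

definition clinear :: "('a::chilbert \<Rightarrow> 'a) \<Rightarrow> bool" where
  "clinear T \<longleftrightarrow> (\<forall>x y. T (x + y) = T x + T y) \<and> (\<forall>c x. T (scaleC c x) = scaleC c (T x))"

definition bounded_op :: "('a::chilbert \<Rightarrow> 'a) \<Rightarrow> bool" where
  "bounded_op T \<longleftrightarrow> clinear T \<and> (\<exists>K. \<forall>x. norm (T x) \<le> K * norm x)"

definition adjoint :: "('a::chilbert \<Rightarrow> 'a) \<Rightarrow> ('a \<Rightarrow> 'a)" where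
  "adjoint T = (THE T'. \<forall>x y. cinner (T x) y = cinner x (T' y))"

definition positive_op :: "('a::chilbert \<Rightarrow> 'a) \<Rightarrow> bool" where
  "positive_op A \<longleftrightarrow> bounded_op A \<and> (\<forall>x. Im (cinner (A x) x) = 0 \<and> Re (cinner (A x) x) \<ge> 0)"

text \<open>Moore--Penrose inverse of A, on its natural domain \<open>R(A) \<oplus> R(A)\<^sup>\<bottom>\<close>:
  \<open>A\<^sup>\<dagger> y\<close> is the unique \<open>x \<in> N(A)\<^sup>\<bottom>\<close> with \<open>y - A x \<in> R(A)\<^sup>\<bottom>\<close>.\<close>
definition mp_inverse :: "('a::chilbert \<Rightarrow> 'a) \<Rightarrow> 'a \<Rightarrow> 'a" where
  "mp_inverse A y = (THE x. (\<forall>z. A z = 0 \<longrightarrow> cinner x z = 0) \<and>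
                            (\<forall>w. cinner (y - A x) (A w) = 0))"

definition BA :: "('a::chilbert \<Rightarrow> 'a) \<Rightarrow> ('a \<Rightarrow> 'a) set" where
  "BA A = {S. bounded_op S \<and> (\<exists>R. bounded_op R \<and> A \<circ> R = adjoint S \<circ> A)}"

definition A_adj :: "('a::chilbert \<Rightarrow> 'a) \<Rightarrow> ('a \<Rightarrow> 'a) \<Rightarrow> ('a \<Rightarrow> 'a)" where
  "A_adj A S = mp_inverse A \<circ> adjoint S \<circ> A"

definition A_inner :: "('a::chilbert \<Rightarrow> 'a) \<Rightarrow> 'a \<Rightarrow> 'a \<Rightarrow> complex" where
  "A_inner A x z = cinner (A x) z"

definition A_norm :: "('a::chilbert \<Rightarrow> 'a) \<Rightarrow> 'a \<Rightarrow> real" where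
  "A_norm A z = sqrt (Re (A_inner A z z))"

definition A_sphere :: "('a::chilbert \<Rightarrow> 'a) \<Rightarrow> 'a set" where
  "A_sphere A = {z. A_norm A z = 1}"

text \<open>Supremum / infimum over the A-unit sphere; convention 0 when the sphere is empty
  (which happens only for A = 0).\<close>
definition A_sup :: "('a::chilbert \<Rightarrow> 'a) \<Rightarrow> ('a \<Rightarrow> real) \<Rightarrow> real" where
  "A_sup A f = (if A_sphere A = {} then 0 else (SUP z\<in>A_sphere A. f z))"

definition A_inf :: "('a::chilbert \<Rightarrow> 'a) \<Rightarrow> ('a \<Rightarrow> real) \<Rightarrow> real" where
  "A_inf A f = (if A_sphere A = {} then 0 else (INF z\<in>A_sphere A. f z))"

definition A_opnorm :: "('a::chilbert \<Rightarrow> 'a) \<Rightarrow> ('a \<Rightarrow> 'a) \<Rightarrow> real" where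
  "A_opnorm A T = A_sup A (\<lambda>z. A_norm A (T z))"

definition A_crawford :: "('a::chilbert \<Rightarrow> 'a) \<Rightarrow> ('a \<Rightarrow> 'a) \<Rightarrow> real" where
  "A_crawford A T = A_inf A (\<lambda>z. cmod (A_inner A (T z) z))"

definition A_dw_radius :: "('a::chilbert \<Rightarrow> 'a) \<Rightarrow> ('a \<Rightarrow> 'a) \<Rightarrow> real" where
  "A_dw_radius A T = A_sup A (\<lambda>z. sqrt ((cmod (A_inner A (T z) z))\<^sup>2 + (A_norm A (T z)) ^ 4))"

end

theory Submission
  imports Defs
begin

lemma scaleC_zero_right[simp]: "scaleC c (0::'a::chilbert) = 0"
proof -
  have "scaleC c (0::'a) = scaleC c 0 + scaleC c 0" by (metis add.right_neutral scaleC_add_right)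
  then show ?thesis by simp
qed

lemma scaleC_zero_left[simp]: "scaleC 0 (x::'a::chilbert) = 0"
  by (metis of_real_0 scaleR_scaleC scaleR_zero_left)

lemma scaleC_minus_left: "scaleC (- c) (x::'a::chilbert) = - scaleC c x"
proof -
  have "scaleC (- c) x + scaleC c x = 0" by (metis scaleC_add_left add.left_inverse scaleC_zero_left)
  then show ?thesis by (simp add: eq_neg_iff_add_eq_0)
qed

lemma scaleC_minus_right: "scaleC c (- (x::'a::chilbert)) = - scaleC c x"
proof -
  have "scaleC c (- x) + scaleC c x = 0" by (metis scaleC_add_right add.left_inverse scaleC_zero_right)
  then show ?thesis by (simp add: eq_neg_iff_add_eq_0)
qed

lemma scaleC_diff_right: "scaleC c ((x::'a::chilbert) - y) = scaleC c x - scaleC c y"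
  by (metis diff_conv_add_uminus scaleC_add_right scaleC_minus_right)

lemma scaleC_diff_left: "scaleC (c - d) (x::'a::chilbert) = scaleC c x - scaleC d x"
  by (metis diff_conv_add_uminus scaleC_add_left scaleC_minus_left)

lemma scaleC_of_real: "scaleC (complex_of_real r) (x::'a::chilbert) = scaleR r x"
  by (simp add: scaleR_scaleC)

lemma cinner_zero_left[simp]: "cinner (0::'a::chilbert) y = 0"
  by (metis cinner_scaleC_left mult_zero_left scaleC_zero_left)

lemma cinner_minus_left: "cinner (- (x::'a::chilbert)) y = - cinner x y"
  by (metis cinner_scaleC_left mult_minus1 scaleC_minus_left scaleC_one)

lemma cinner_diff_left: "cinner ((x::'a::chilbert) - z) y = cinner x y - cinner z y"
  by (metis cinner_add_left cinner_minus_left diff_conv_add_uminus)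

lemma cinner_add_right: "cinner (x::'a::chilbert) (y + z) = cinner x y + cinner x z"
  by (metis cinner_add_left cinner_commute complex_cnj_add)

lemma cinner_scaleC_right: "cinner (x::'a::chilbert) (scaleC c y) = cnj c * cinner x y"
  by (metis cinner_commute cinner_scaleC_left complex_cnj_mult)

lemma cinner_zero_right[simp]: "cinner (x::'a::chilbert) 0 = 0"
  by (metis cinner_commute cinner_zero_left complex_cnj_zero)

lemma cinner_diff_right: "cinner (x::'a::chilbert) (y - z) = cinner x y - cinner x z"
  by (metis cinner_commute cinner_diff_left complex_cnj_diff)

lemma norm_sq_cinner: "(norm (x::'a::chilbert))\<^sup>2 = Re (cinner x x)"
  by (simp add: cinner_self_norm)

lemma cinner_self_zero: "cinner (x::'a::chilbert) x = 0 \<longleftrightarrow> x = 0"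
  by (simp add: cinner_self_norm)

lemma clinear_add: "clinear T \<Longrightarrow> T (x + y) = T x + T y"
  by (simp add: clinear_def)
lemma clinear_scaleC: "clinear T \<Longrightarrow> T (scaleC c x) = scaleC c (T x)"
  by (simp add: clinear_def)
lemma clinear_zero: "clinear T \<Longrightarrow> T 0 = 0"
  by (metis add_cancel_right_right add_0 clinear_add)
lemma clinear_diff: "clinear T \<Longrightarrow> T (x - y) = T x - T y"
  by (metis add_diff_cancel clinear_add diff_add_cancel)
lemma clinear_scaleR: "clinear T \<Longrightarrow> T (scaleR r x) = scaleR r (T x)"
  by (simp add: clinear_scaleC scaleR_scaleC)

lemma clinear_bounded_linear:
  assumes "clinear T" "\<And>x. norm (T x) \<le> K * norm x"
  shows "bounded_linear T"
  by (rule bounded_linear_intro[where K=K]) (use assms in \<open>auto simp: clinear_add clinear_scaleR mult.commute\<close>)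

lemma bounded_op_pos: fixes T :: "'a::chilbert \<Rightarrow> 'a" assumes "bounded_op T" shows "\<exists>K>0. \<forall>x. norm (T x) \<le> K * norm x"
proof -
  obtain K where K: "\<forall>x. norm (T x) \<le> K * norm x" using assms bounded_op_def by blast
  have "\<forall>x. norm (T x) \<le> (\<bar>K\<bar> + 1) * norm x"
  proof
    fix x :: 'a
    have "K * norm x \<le> (\<bar>K\<bar> + 1) * norm x" by (intro mult_right_mono) auto
    then show "norm (T x) \<le> (\<bar>K\<bar> + 1) * norm x" using K by (meson order_trans)
  qed
  then show ?thesis by (intro exI[of _ "\<bar>K\<bar> + 1"]) auto
qed

lemma bounded_op_bl: "bounded_op T \<Longrightarrow> bounded_linear T"
  unfolding bounded_op_def using clinear_bounded_linear by blast

lemma mult_cnj_cmod: "z * cnj z = complex_of_real ((cmod z)\<^sup>2)"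
  by (metis complex_norm_square of_real_power)

lemma cnj_mult_cmod: "cnj z * z = complex_of_real ((cmod z)\<^sup>2)"
  by (metis mult.commute mult_cnj_cmod)

section \<open>Hermitian forms\<close>

definition hform :: "('a::chilbert \<Rightarrow> 'a \<Rightarrow> complex) \<Rightarrow> bool" where
  "hform f \<longleftrightarrow> (\<forall>x y z. f (x + y) z = f x z + f y z) \<and> (\<forall>c x z. f (scaleC c x) z = c * f x z)
     \<and> (\<forall>x y. f x y = cnj (f y x)) \<and> (\<forall>x. 0 \<le> Re (f x x))"

lemma hform_cinner: "hform (cinner :: 'a::chilbert \<Rightarrow> 'a \<Rightarrow> complex)"
  unfolding hform_def by (auto simp: cinner_add_left cinner_scaleC_left cinner_self_norm intro: cinner_commute)

context
  fixes f :: "'a::chilbert \<Rightarrow> 'a \<Rightarrow> complex"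
  assumes hf: "hform f"
begin

lemma hf_add_left: "f (x + y) z = f x z + f y z" using hf hform_def by blast
lemma hf_scale_left: "f (scaleC c x) z = c * f x z" using hf hform_def by blast
lemma hf_herm: "f x y = cnj (f y x)" using hf hform_def by blast
lemma hf_pos: "0 \<le> Re (f x x)" using hf hform_def by blast
lemma hf_real: "Im (f x x) = 0" using hf_herm[of x x] by (metis cnj.simps(2) neg_equal_zero)
lemma hf_self: "f x x = complex_of_real (Re (f x x))" using hf_real by (simp add: complex_eq_iff)
lemma hf_minus_left: "f (- x) z = - f x z"
  by (metis hf_scale_left mult_minus1 scaleC_minus_left scaleC_one)
lemma hf_diff_left: "f (x - y) z = f x z - f y z"
  by (metis diff_conv_add_uminus hf_add_left hf_minus_left)
lemma hf_diff_right: "f z (x - y) = f z x - f z y"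
  by (metis complex_cnj_diff hf_diff_left hf_herm)
lemma hf_add_right: "f z (x + y) = f z x + f z y"
  by (metis complex_cnj_add hf_add_left hf_herm)
lemma hf_scale_right: "f z (scaleC c x) = cnj c * f z x"
  by (metis complex_cnj_mult hf_herm hf_scale_left)

lemma hf_expand:
  "f (x - scaleC t y) (x - scaleC t y) = f x x - cnj t * f x y - t * cnj (f x y) + t * cnj t * f y y"
  by (simp add: hf_diff_left hf_diff_right hf_scale_left hf_scale_right algebra_simps hf_herm[of y x])

lemma hf_expand_re:
  "Re (f (x - scaleC t y) (x - scaleC t y)) = Re (f x x) - 2 * Re (cnj t * f x y) + (cmod t)\<^sup>2 * Re (f y y)"
proof -
  have "t * cnj t = complex_of_real ((cmod t)\<^sup>2)" by (rule mult_cnj_cmod)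
  then have e: "Re (t * cnj t * f y y) = (cmod t)\<^sup>2 * Re (f y y)"
    by (metis Re_complex_of_real hf_self of_real_mult)
  have "Re (t * cnj (f x y)) = Re (cnj t * f x y)"
    by (metis complex_cnj_cnj complex_cnj_mult cnj.simps(1) mult.commute)
  then show ?thesis unfolding hf_expand using e by simp
qed

lemma hf_cs: "(cmod (f x y))\<^sup>2 \<le> Re (f x x) * Re (f y y)"
proof (cases "Re (f y y) = 0")
  case True
  show ?thesis
  proof (rule ccontr)
    assume "\<not> ?thesis"
    then have a: "cmod (f x y) \<noteq> 0" using True by auto
    define s where "s = (Re (f x x) + 1) / (2 * (cmod (f x y))\<^sup>2)"
    define t where "t = complex_of_real s * f x y"
    have "cnj t * f x y = complex_of_real s * (cnj (f x y) * f x y)"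
      unfolding t_def by simp
    then have "Re (cnj t * f x y) = s * (cmod (f x y))\<^sup>2"
      by (simp only: cnj_mult_cmod) (metis Re_complex_of_real of_real_mult)
    moreover have "0 \<le> Re (f (x - scaleC t y) (x - scaleC t y))" by (rule hf_pos)
    ultimately have "0 \<le> Re (f x x) - 2 * (s * (cmod (f x y))\<^sup>2)" unfolding hf_expand_re using True by simp
    moreover have "2 * (s * (cmod (f x y))\<^sup>2) = Re (f x x) + 1" unfolding s_def using a by simp
    ultimately show False by simp
  qed
next
  case False
  then have p: "Re (f y y) > 0" using hf_pos[of y] by simp
  define t where "t = f x y / complex_of_real (Re (f y y))"
  have "cnj t * f x y = complex_of_real ((cmod (f x y))\<^sup>2 / Re (f y y))"
  proof -
    have "cnj t * f x y = (cnj (f x y) * f x y) / complex_of_real (Re (f y y))"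
      unfolding t_def by simp
    then show ?thesis by (simp only: cnj_mult_cmod) simp
  qed
  then have r1: "Re (cnj t * f x y) = (cmod (f x y))\<^sup>2 / Re (f y y)" by simp
  have r2: "(cmod t)\<^sup>2 = (cmod (f x y))\<^sup>2 / (Re (f y y))\<^sup>2"
    unfolding t_def using p by (simp add: norm_divide power_divide)
  have "0 \<le> Re (f (x - scaleC t y) (x - scaleC t y))" by (rule hf_pos)
  then have "0 \<le> Re (f x x) - 2 * ((cmod (f x y))\<^sup>2 / Re (f y y)) + (cmod (f x y))\<^sup>2 / (Re (f y y))\<^sup>2 * Re (f y y)"
    unfolding hf_expand_re r1 r2 .
  also have "\<dots> = Re (f x x) - (cmod (f x y))\<^sup>2 / Re (f y y)" using p by (simp add: power2_eq_square field_simps)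
  finally have "(cmod (f x y))\<^sup>2 / Re (f y y) \<le> Re (f x x)" by simp
  then show ?thesis using p by (simp add: divide_le_eq mult.commute)
qed

lemma hf_cs': "cmod (f x y) \<le> sqrt (Re (f x x)) * sqrt (Re (f y y))"
  by (metis hf_cs real_le_rsqrt real_sqrt_mult norm_ge_zero)

lemma hf_min_orth:
  assumes "\<And>t. Re (f x x) \<le> Re (f (x - scaleC t y) (x - scaleC t y))" "Re (f y y) > 0"
  shows "f x y = 0"
proof -
  define t where "t = f x y / complex_of_real (Re (f y y))"
  have "cnj t * f x y = complex_of_real ((cmod (f x y))\<^sup>2 / Re (f y y))"
  proof -
    have "cnj t * f x y = (cnj (f x y) * f x y) / complex_of_real (Re (f y y))"
      unfolding t_def by simp
    then show ?thesis by (simp only: cnj_mult_cmod) simp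
  qed
  then have r1: "Re (cnj t * f x y) = (cmod (f x y))\<^sup>2 / Re (f y y)" by simp
  have r2: "(cmod t)\<^sup>2 = (cmod (f x y))\<^sup>2 / (Re (f y y))\<^sup>2"
    unfolding t_def using assms(2) by (simp add: norm_divide power_divide)
  have "Re (f x x) \<le> Re (f x x) - 2 * ((cmod (f x y))\<^sup>2 / Re (f y y)) + (cmod (f x y))\<^sup>2 / (Re (f y y))\<^sup>2 * Re (f y y)"
    using assms(1)[of t] unfolding hf_expand_re r1 r2 .
  also have "\<dots> = Re (f x x) - (cmod (f x y))\<^sup>2 / Re (f y y)" using assms(2) by (simp add: power2_eq_square field_simps)
  finally have "(cmod (f x y))\<^sup>2 / Re (f y y) \<le> 0" by simp
  then have "(cmod (f x y))\<^sup>2 \<le> 0" using assms(2) by (simp add: divide_le_0_iff)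
  then show ?thesis by simp
qed

end


section \<open>Projection theorem\<close>

lemma parallelogram: "(norm ((a::'a::chilbert) + b))\<^sup>2 + (norm (a - b))\<^sup>2 = 2 * (norm a)\<^sup>2 + 2 * (norm b)\<^sup>2"
  unfolding norm_sq_cinner by (simp add: cinner_add_left cinner_add_right cinner_diff_left cinner_diff_right)

lemma projection_exists:
  fixes N :: "'a::chilbert set" and u :: 'a
  assumes cl: "closed N" and z: "0 \<in> N" and ad: "\<And>x y. x\<in>N \<Longrightarrow> y\<in>N \<Longrightarrow> x+y \<in> N"
    and sc: "\<And>c x. x\<in>N \<Longrightarrow> scaleC c x \<in> N"
  shows "\<exists>n\<in>N. \<forall>m\<in>N. cinner (u - n) m = 0"
proof -
  define D where "D = (INF n\<in>N. (norm (u - n))\<^sup>2)"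
  have bdd: "bdd_below ((\<lambda>n. (norm (u - n))\<^sup>2) ` N)" by (rule bdd_belowI[of _ 0]) auto
  have Dle: "D \<le> (norm (u - n))\<^sup>2" if "n \<in> N" for n
    unfolding D_def using bdd that by (rule cINF_lower)
  have "\<exists>n\<in>N. (norm (u - n))\<^sup>2 < D + 1 / real (Suc k)" for k
  proof -
    have "D < D + 1 / real (Suc k)" by simp
    then show ?thesis unfolding D_def using cINF_less_iff[OF _ bdd] z by blast
  qed
  then obtain s where s: "\<And>k. s k \<in> N" "\<And>k. (norm (u - s k))\<^sup>2 < D + 1 / real (Suc k)"
    by metis
  have mid: "(norm (s j - s k))\<^sup>2 \<le> 2 / real (Suc j) + 2 / real (Suc k)" for j k
  proof -
    define m where "m = scaleR (1/2) (s j + s k)"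
    have mN: "m \<in> N" unfolding m_def scaleR_scaleC using s(1) ad sc by blast
    have "(u - s j) + (u - s k) = scaleR 2 (u - m)" unfolding m_def by (simp add: algebra_simps scaleR_2)
    then have "(norm ((u - s j) + (u - s k)))\<^sup>2 = 4 * (norm (u - m))\<^sup>2"
      by (simp add: power2_eq_square)
    moreover have "(u - s j) - (u - s k) = s k - s j" by simp
    ultimately have "4 * (norm (u - m))\<^sup>2 + (norm (s k - s j))\<^sup>2 = 2 * (norm (u - s j))\<^sup>2 + 2 * (norm (u - s k))\<^sup>2"
      using parallelogram[of "u - s j" "u - s k"] by simp
    then show ?thesis using Dle[OF mN] s(2)[of j] s(2)[of k] by (simp add: norm_minus_commute)
  qed
  have "Cauchy s"
  proof (rule metric_CauchyI)
    fix e :: real assume e: "0 < e"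
    obtain M :: nat where M: "4 / (e\<^sup>2) < real M" using reals_Archimedean2 by blast
    have "4 / real (Suc M) < e\<^sup>2"
    proof -
      have "4 / e\<^sup>2 < real (Suc M)" using M by simp
      then show ?thesis using e by (simp add: field_simps)
    qed
    have "dist (s j) (s k) < e" if "j \<ge> M" "k \<ge> M" for j k
    proof -
      have "2 / real (Suc j) \<le> 2 / real (Suc M)" "2 / real (Suc k) \<le> 2 / real (Suc M)"
        using that by (auto intro!: divide_left_mono)
      then have "(norm (s j - s k))\<^sup>2 < e\<^sup>2" using mid[of j k] \<open>4 / real (Suc M) < e\<^sup>2\<close> by simp
      then show ?thesis using e by (simp add: dist_norm power_less_imp_less_base)
    qed
    then show "\<exists>M. \<forall>m\<ge>M. \<forall>n\<ge>M. dist (s m) (s n) < e" by blast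
  qed
  then obtain l where l: "s \<longlonglongrightarrow> l" using Cauchy_convergent_iff convergent_def by blast
  have lN: "l \<in> N" using cl closed_sequential_limits l s(1) by blast
  have "(\<lambda>k. (norm (u - s k))\<^sup>2) \<longlonglongrightarrow> (norm (u - l))\<^sup>2"
    by (intro tendsto_intros l)
  moreover have "(\<lambda>k. D + 1 / real (Suc k)) \<longlonglongrightarrow> D"
    using tendsto_add[OF tendsto_const LIMSEQ_inverse_real_of_nat] by (simp add: inverse_eq_divide)
  ultimately have lD: "(norm (u - l))\<^sup>2 \<le> D"
    by (rule LIMSEQ_le) (use s(2) less_imp_le in blast)
  have "cinner (u - l) m = 0" if mN: "m \<in> N" for m
  proof (cases "m = 0")
    case True then show ?thesis by simp
  next
    case False
    have "Re (cinner m m) > 0" using False by (metis norm_sq_cinner norm_eq_zero zero_less_power2)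
    moreover have "Re (cinner (u - l) (u - l)) \<le> Re (cinner (u - l - scaleC t m) (u - l - scaleC t m))" for t
    proof -
      have "l + scaleC t m \<in> N" using ad sc lN mN by blast
      then have "(norm (u - l))\<^sup>2 \<le> (norm (u - (l + scaleC t m)))\<^sup>2" using lD Dle order_trans by blast
      then show ?thesis unfolding norm_sq_cinner by (simp add: diff_diff_eq)
    qed
    ultimately show ?thesis using hf_min_orth[OF hform_cinner] by blast
  qed
  then show ?thesis using lN by blast
qed


section \<open>Riesz representation and adjoints\<close>

lemma cinner_cs: "cmod (cinner (x::'a::chilbert) y) \<le> norm x * norm y"
proof -
  have "sqrt (Re (cinner x x)) = norm x" for x :: 'a by (metis norm_sq_cinner norm_ge_zero real_sqrt_abs abs_of_nonneg)
  then show ?thesis using hf_cs'[OF hform_cinner, of x y] by simp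
qed

lemma cinner_ext: assumes "\<And>x. cinner x a = cinner x (b::'a::chilbert)" shows "a = b"
proof -
  have "cinner (a - b) (a - b) = 0" using assms[of "a - b"] by (simp add: cinner_diff_right)
  then show ?thesis by (simp add: cinner_self_zero)
qed

lemma kernel_subspace:
  fixes g :: "'a::chilbert \<Rightarrow> 'b::real_normed_vector"
  assumes bl: "bounded_linear g"
  shows "closed {x. g x = 0}"
  using closed_Collect_eq[OF linear_continuous_on[OF bl] continuous_on_const] .

lemma riesz:
  fixes g :: "'a::chilbert \<Rightarrow> complex"
  assumes add: "\<And>x y. g (x+y) = g x + g y" and sc: "\<And>c x. g (scaleC c x) = c * g x"
    and bd: "\<And>x. cmod (g x) \<le> K * norm x"
  shows "\<exists>v. \<forall>x. g x = cinner x v"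
proof (cases "\<forall>x. g x = 0")
  case True then show ?thesis by (intro exI[of _ 0]) simp
next
  case False
  then obtain u where u: "g u \<noteq> 0" by blast
  have bl: "bounded_linear g"
    by (rule bounded_linear_intro[where K=K]) (use add sc bd in \<open>auto simp: scaleR_scaleC scaleR_conv_of_real mult.commute\<close>)
  have g0: "g 0 = 0" by (metis add add_cancel_right_right add_0)
  have gd: "g (x - y) = g x - g y" for x y by (metis add diff_add_cancel eq_diff_eq)
  have "\<exists>n\<in>{x. g x = 0}. \<forall>m\<in>{x. g x = 0}. cinner (u - n) m = 0"
    by (rule projection_exists) (use kernel_subspace[OF bl] add sc g0 in auto)
  then obtain n where n: "g n = 0" and orth: "\<And>m. g m = 0 \<Longrightarrow> cinner (u - n) m = 0" by blast
  define p where "p = u - n"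
  have gp: "g p \<noteq> 0" unfolding p_def gd n using u by simp
  then have "p \<noteq> 0" using g0 by auto
  then have pp: "cinner p p \<noteq> 0" by (simp add: cinner_self_zero)
  have "g x = cinner x (scaleC (cnj (g p / cinner p p)) p)" for x
  proof -
    define w where "w = scaleC (g x) p - scaleC (g p) x"
    have "g w = 0" unfolding w_def gd sc by simp
    then have "cinner p w = 0" using orth p_def by blast
    then have "cinner w p = 0" by (metis cinner_commute complex_cnj_zero)
    then have "g x * cinner p p = g p * cinner x p"
      unfolding w_def by (simp add: cinner_diff_left cinner_scaleC_left)
    then show ?thesis using pp by (simp add: cinner_scaleC_right field_simps)
  qed
  then show ?thesis by blast
qed

lemma adjoint_ex:
  fixes S :: "'a::chilbert \<Rightarrow> 'a"
  assumes "bounded_op S"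
  shows "\<exists>T'. \<forall>x y. cinner (S x) y = cinner x (T' y)"
proof -
  obtain K where K: "\<And>x. norm (S x) \<le> K * norm x" using assms bounded_op_def by blast
  have cl: "clinear S" using assms bounded_op_def by blast
  have "\<exists>v. \<forall>x. cinner (S x) y = cinner x v" for y
  proof (rule riesz[where K="K * norm y"])
    show "cinner (S (x + z)) y = cinner (S x) y + cinner (S z) y" for x z
      by (simp add: clinear_add[OF cl] cinner_add_left)
    show "cinner (S (scaleC c x)) y = c * cinner (S x) y" for c x
      by (simp add: clinear_scaleC[OF cl] cinner_scaleC_left)
    show "cmod (cinner (S x) y) \<le> K * norm y * norm x" for x
    proof -
      have "cmod (cinner (S x) y) \<le> norm (S x) * norm y" by (rule cinner_cs)
      also have "\<dots> \<le> K * norm x * norm y" using K by (simp add: mult_right_mono)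
      finally show ?thesis by (simp add: algebra_simps)
    qed
  qed
  then show ?thesis by metis
qed

lemma adjoint_prop:
  fixes S :: "'a::chilbert \<Rightarrow> 'a"
  assumes "bounded_op S"
  shows "cinner (S x) y = cinner x (adjoint S y)"
proof -
  have "\<exists>!T'. \<forall>x y. cinner (S x) y = cinner x (T' y)"
  proof -
    obtain T' where T': "\<forall>x y. cinner (S x) y = cinner x (T' y)" using adjoint_ex[OF assms] by blast
    moreover have "T2 = T'" if "\<forall>x y. cinner (S x) y = cinner x (T2 y)" for T2
      using that T' by (metis cinner_ext ext)
    ultimately show ?thesis by blast
  qed
  from theI'[OF this] show ?thesis unfolding adjoint_def by blast
qed

lemma mp_inverse_range:
  fixes A :: "'a::chilbert \<Rightarrow> 'a"
  assumes bA: "bounded_op A"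
  shows "A (mp_inverse A (A u)) = A u"
proof -
  have cl: "clinear A" using bA bounded_op_def by blast
  let ?P = "\<lambda>x. (\<forall>z. A z = 0 \<longrightarrow> cinner x z = 0) \<and> (\<forall>w. cinner (A u - A x) (A w) = 0)"
  have "\<exists>n\<in>{x. A x = 0}. \<forall>m\<in>{x. A x = 0}. cinner (u - n) m = 0"
    by (rule projection_exists)
      (use kernel_subspace[OF bounded_op_bl[OF bA]] clinear_add[OF cl] clinear_scaleC[OF cl] clinear_zero[OF cl] in auto)
  then obtain n where n: "A n = 0" and orth: "\<And>m. A m = 0 \<Longrightarrow> cinner (u - n) m = 0" by blast
  have P0: "?P (u - n)" using orth by (simp add: clinear_diff[OF cl] n)
  have uniq: "x1 = x2" if "?P x1" "?P x2" for x1 x2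
  proof -
    have "cinner (A (x2 - x1)) (A (x2 - x1)) = 0"
    proof -
      have eq: "(A u - A x1) - (A u - A x2) = A (x2 - x1)" by (simp add: clinear_diff[OF cl])
      have e1: "cinner (A u - A x1) (A (x2 - x1)) = 0" using that(1) by blast
      have e2: "cinner (A u - A x2) (A (x2 - x1)) = 0" using that(2) by blast
      have "cinner ((A u - A x1) - (A u - A x2)) (A (x2 - x1)) = 0"
        using e1 e2 by (simp only: cinner_diff_left) simp
      then show ?thesis by (simp only: eq)
    qed
    then have "A (x2 - x1) = 0" by (simp add: cinner_self_zero)
    then have "cinner x1 (x2 - x1) = 0" "cinner x2 (x2 - x1) = 0" using that by auto
    then have "cinner (x2 - x1) (x2 - x1) = 0" by (simp add: cinner_diff_left)
    then show ?thesis by (simp add: cinner_self_zero)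
  qed
  have "\<exists>!x. ?P x" using P0 uniq by blast
  then have "?P (mp_inverse A (A u))" unfolding mp_inverse_def by (rule theI')
  then have "cinner (A u - A (mp_inverse A (A u))) (A (u - mp_inverse A (A u))) = 0" by blast
  then have "cinner (A u - A (mp_inverse A (A u))) (A u - A (mp_inverse A (A u))) = 0"
    by (simp add: clinear_diff[OF cl])
  then show ?thesis by (simp add: cinner_self_zero)
qed


section \<open>The A-form\<close>

lemma pos_hform:
  fixes A :: "'a::chilbert \<Rightarrow> 'a"
  assumes pA: "positive_op A"
  shows "hform (A_inner A)"
proof -
  have cl: "clinear A" using pA positive_op_def bounded_op_def by blast
  have im: "Im (cinner (A z) z) = 0" for z using pA positive_op_def by blast
  have herm: "cinner (A x) y = cnj (cinner (A y) x)" for x y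
  proof -
    define a where "a = cinner (A x) y"
    define b where "b = cinner (A y) x"
    have "cinner (A (x + y)) (x + y) = cinner (A x) x + a + b + cinner (A y) y"
      unfolding a_def b_def by (simp add: clinear_add[OF cl] cinner_add_left cinner_add_right)
    then have i1: "Im a + Im b = 0" using im[of "x+y"] im[of x] im[of y] by simp
    have "cinner (A (x + scaleC \<i> y)) (x + scaleC \<i> y) = cinner (A x) x + cnj \<i> * a + \<i> * b + \<i> * (cnj \<i> * cinner (A y) y)"
      unfolding a_def b_def
      by (simp only: clinear_add[OF cl] clinear_scaleC[OF cl] cinner_add_left cinner_add_right
          cinner_scaleC_left cinner_scaleC_right) (simp add: algebra_simps)
    then have "cinner (A (x + scaleC \<i> y)) (x + scaleC \<i> y) = cinner (A x) x - \<i> * a + \<i> * b + cinner (A y) y"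
      by simp
    then have i2: "Re b - Re a = 0" using im[of "x + scaleC \<i> y"] im[of x] im[of y] by simp
    show ?thesis using i1 i2 unfolding a_def[symmetric] b_def[symmetric] by (simp add: complex_eq_iff)
  qed
  have "\<forall>x y. A_inner A x y = cnj (A_inner A y x)" unfolding A_inner_def using herm by blast
  moreover have "\<forall>x. 0 \<le> Re (A_inner A x x)" unfolding A_inner_def using pA positive_op_def by blast
  moreover have "\<forall>x y z. A_inner A (x + y) z = A_inner A x z + A_inner A y z"
    unfolding A_inner_def by (simp add: clinear_add[OF cl] cinner_add_left)
  moreover have "\<forall>c x z. A_inner A (scaleC c x) z = c * A_inner A x z"
    unfolding A_inner_def by (simp add: clinear_scaleC[OF cl] cinner_scaleC_left)
  ultimately show ?thesis unfolding hform_def by blast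
qed

lemma reid:
  fixes f :: "'a::chilbert \<Rightarrow> 'a \<Rightarrow> complex" and T :: "'a \<Rightarrow> 'a"
  assumes hf: "hform f" and sym: "\<And>u v. f (T u) v = f u (T v)"
    and bT: "\<And>x. norm (T x) \<le> KT * norm x" and KT: "KT > 0"
    and bf: "\<And>x. Re (f x x) \<le> KA * (norm x)\<^sup>2"
  shows "Re (f (T x) (T x)) \<le> KT\<^sup>2 * Re (f x x)"
proof -
  have symj: "f ((T^^j) u) v = f u ((T^^j) v)" for j u v
  proof (induction j arbitrary: u v)
    case 0 then show ?case by simp
  next
    case (Suc j)
    have "f ((T^^Suc j) u) v = f ((T^^j) u) (T v)" by (simp add: sym)
    also have "\<dots> = f u ((T^^j) (T v))" by (rule Suc)
    also have "\<dots> = f u ((T^^Suc j) v)" by (simp add: funpow_swap1)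
    finally show ?case .
  qed
  define b where "b k = Re (f ((T^^k) x) ((T^^k) x))" for k
  have b0: "b k \<ge> 0" for k unfolding b_def by (rule hf_pos[OF hf])
  have bsq: "(b k)\<^sup>2 \<le> b 0 * b (2*k)" for k
  proof -
    have "f ((T^^k) x) ((T^^k) x) = f ((T^^k) ((T^^k) x)) x" by (rule symj[symmetric])
    also have "\<dots> = f ((T^^(2*k)) x) x" by (simp add: mult_2 funpow_add)
    finally have e: "b k = Re (f ((T^^(2*k)) x) x)" unfolding b_def by simp
    have "(b k)\<^sup>2 \<le> (cmod (f ((T^^(2*k)) x) x))\<^sup>2"
      unfolding e by (metis abs_Re_le_cmod power2_abs power_mono abs_ge_zero)
    also have "\<dots> \<le> b (2*k) * b 0" unfolding b_def using hf_cs[OF hf] by simp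
    finally show ?thesis by (simp add: mult.commute)
  qed
  have normT: "norm ((T^^m) x) \<le> KT^m * norm x" for m
  proof (induction m)
    case 0 then show ?case by simp
  next
    case (Suc m)
    have "norm ((T^^Suc m) x) \<le> KT * norm ((T^^m) x)" using bT by simp
    also have "\<dots> \<le> KT * (KT^m * norm x)" using Suc KT by (simp add: mult_left_mono)
    finally show ?case by simp
  qed
  define C where "C = \<bar>KA\<bar> * (norm x)\<^sup>2"
  define N where "N = KT\<^sup>2"
  have Npos: "N > 0" unfolding N_def using KT by simp
  have bbound: "b m \<le> C * N^m" for m
  proof -
    have "b m \<le> KA * (norm ((T^^m) x))\<^sup>2" unfolding b_def by (rule bf)
    also have "\<dots> \<le> \<bar>KA\<bar> * (norm ((T^^m) x))\<^sup>2" by (simp add: mult_right_mono)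
    also have "\<dots> \<le> \<bar>KA\<bar> * (KT^m * norm x)\<^sup>2"
      using normT[of m] by (intro mult_left_mono power_mono) auto
    also have "\<dots> = C * N^m" unfolding C_def N_def by (simp add: power_mult_distrib power_mult[symmetric] mult.commute)
    finally show ?thesis .
  qed
  have P: "b 1 ^ (2^n) * b 0 \<le> b 0 ^ (2^n) * b (2^n)" for n
  proof (induction n)
    case 0 then show ?case by (simp add: mult.commute)
  next
    case (Suc n)
    show ?case
    proof (cases "b 0 = 0")
      case True then show ?thesis using b0 by simp
    next
      case False
      then have p0: "b 0 > 0" using b0[of 0] by simp
      have "(b 1 ^ (2^n) * b 0)\<^sup>2 \<le> (b 0 ^ (2^n) * b (2^n))\<^sup>2"
        using Suc b0 by (intro power_mono) auto
      also have "\<dots> = (b 0 ^ (2^n))\<^sup>2 * (b (2^n))\<^sup>2" by (simp add: power_mult_distrib)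
      also have "\<dots> \<le> (b 0 ^ (2^n))\<^sup>2 * (b 0 * b (2 * 2^n))"
        using bsq[of "2^n"] by (intro mult_left_mono) auto
      finally have "b 1 ^ (2^Suc n) * (b 0)\<^sup>2 \<le> b 0 ^ (2^Suc n) * b (2^Suc n) * b 0"
        by (simp add: power_mult_distrib power_mult[symmetric] algebra_simps)
      then have "(b 1 ^ (2^Suc n) * b 0) * b 0 \<le> (b 0 ^ (2^Suc n) * b (2^Suc n)) * b 0"
        by (simp add: power2_eq_square algebra_simps)
      then show ?thesis using p0 by simp
    qed
  qed
  have "b 1 \<le> N * b 0"
  proof (cases "b 0 = 0")
    case True
    then have "(b 1)\<^sup>2 \<le> 0" using bsq[of 1] by simp
    then show ?thesis using True by simp
  next
    case False
    then have p0: "b 0 > 0" using b0[of 0] by simp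
    show ?thesis
    proof (rule ccontr)
      assume "\<not> ?thesis"
      then have lt: "N * b 0 < b 1" by simp
      define r where "r = b 1 / (N * b 0)"
      have r1: "r > 1" unfolding r_def using lt p0 Npos by simp
      obtain n where n: "C / b 0 < r ^ n" using real_arch_pow[OF r1] by blast
      define E :: nat where "E = 2^n"
      have "n \<le> E" unfolding E_def using less_exp[of n] by simp
      then have "r ^ n \<le> r ^ E" using r1 by (intro power_increasing) auto
      moreover have "C < r ^ n * b 0" using n p0 by (simp add: divide_less_eq)
      ultimately have "C < r ^ E * b 0" using p0 by (meson less_le_trans mult_right_mono less_imp_le)
      moreover have "r ^ E * b 0 \<le> C"
      proof -
        have "b 1 ^ E * b 0 \<le> b 0 ^ E * (C * N ^ E)"
          using P[of n] bbound[of E] b0 unfolding E_def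
          by (meson order_trans mult_left_mono zero_le_power)
        moreover have "b 1 ^ E = r ^ E * (N ^ E * b 0 ^ E)"
          unfolding r_def using p0 Npos by (simp add: power_divide power_mult_distrib)
        ultimately have "(r ^ E * b 0) * (N ^ E * b 0 ^ E) \<le> C * (N ^ E * b 0 ^ E)"
          by (simp add: algebra_simps)
        moreover have "N ^ E * b 0 ^ E > 0" using p0 Npos by simp
        ultimately show ?thesis using mult_le_cancel_right_pos by blast
      qed
      ultimately show False by simp
    qed
  qed
  then show ?thesis unfolding b_def N_def by simp
qed


lemma A_norm_sq: assumes "positive_op A" shows "(A_norm A x)\<^sup>2 = Re (A_inner A x x)"
  proof -
  have "0 \<le> Re (A_inner A x x)" by (rule hf_pos[OF pos_hform[OF assms]])
  then show ?thesis unfolding A_norm_def by (rule real_sqrt_pow2)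
qed

lemma A_norm_nonneg0: assumes "positive_op A" shows "A_norm A x \<ge> 0"
  unfolding A_norm_def using hf_pos[OF pos_hform[OF assms]] by simp

lemma A_cs: assumes "positive_op A" shows "cmod (A_inner A x y) \<le> A_norm A x * A_norm A y"
  unfolding A_norm_def using hf_cs'[OF pos_hform[OF assms]] .

lemma A_norm_scaleR: assumes "positive_op A" shows "A_norm A (scaleR r x) = \<bar>r\<bar> * A_norm A x"
proof -
  have hf: "hform (A_inner A)" using pos_hform[OF assms] .
  have "A_inner A (scaleR r x) (scaleR r x) = complex_of_real (r * r) * A_inner A x x"
    unfolding scaleR_scaleC hf_scale_left[OF hf] hf_scale_right[OF hf] by simp
  then have "Re (A_inner A (scaleR r x) (scaleR r x)) = r\<^sup>2 * Re (A_inner A x x)"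
    by (simp add: power2_eq_square)
  then show ?thesis unfolding A_norm_def by (simp add: real_sqrt_mult)
qed

theorem theorem2p11:
  fixes A S :: "'a::chilbert \<Rightarrow> 'a"
  assumes "positive_op A"
    and "S \<in> BA A"
  shows "(A_dw_radius A S)\<^sup>2 \<le> (A_opnorm A S) ^ 4 + 2 * (A_opnorm A S)\<^sup>2
           - sqrt (A_crawford A (A_adj A S \<circ> S) * A_crawford A (S \<circ> A_adj A S))"
proof (cases "A_sphere A = {}")
  case True
  then show ?thesis unfolding A_dw_radius_def A_opnorm_def A_crawford_def A_sup_def A_inf_def by simp
next
  case False
  note pA = assms(1)
  let ?f = "A_inner A"
  have hf: "hform ?f" by (rule pos_hform[OF pA])
  have Ann: "\<And>x. A_norm A x \<ge> 0" by (rule A_norm_nonneg0[OF pA])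
  have bA: "bounded_op A" using pA positive_op_def by blast
  have bS: "bounded_op S" using assms(2) BA_def by blast
  obtain R where bR: "bounded_op R" and AR: "A \<circ> R = adjoint S \<circ> A" using assms(2) BA_def by blast
  have ARw: "A (R w) = adjoint S (A w)" for w using AR by (metis comp_apply)
  have clS: "clinear S" using bS bounded_op_def by blast
  obtain KS where KS: "KS > 0" "\<And>x. norm (S x) \<le> KS * norm x" using bounded_op_pos[OF bS] by blast
  obtain KR where KR: "KR > 0" "\<And>x. norm (R x) \<le> KR * norm x" using bounded_op_pos[OF bR] by blast
  obtain KA where KA: "KA > 0" "\<And>x. norm (A x) \<le> KA * norm x" using bounded_op_pos[OF bA] by blast
  define T where "T = R \<circ> S"
  have key: "?f (T u) v = ?f (S u) (S v)" for u v
  proof -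
    have "?f (T u) v = cinner (adjoint S (A (S u))) v" unfolding T_def A_inner_def by (simp add: ARw)
    also have "\<dots> = cnj (cinner v (adjoint S (A (S u))))" by (rule cinner_commute)
    also have "\<dots> = cnj (cinner (S v) (A (S u)))" by (simp add: adjoint_prop[OF bS])
    also have "\<dots> = ?f (S u) (S v)" unfolding A_inner_def by (metis cinner_commute)
    finally show ?thesis .
  qed
  have sym: "?f (T u) v = ?f u (T v)" for u v
    by (metis key hf_herm[OF hf])
  have bT: "norm (T x) \<le> (KR * KS) * norm x" for x
  proof -
    have "norm (T x) \<le> KR * norm (S x)" unfolding T_def using KR by simp
    also have "\<dots> \<le> KR * (KS * norm x)" using KS KR by (simp add: mult_left_mono)
    finally show ?thesis by (simp add: mult.assoc)
  qed
  have bf: "Re (?f x x) \<le> KA * (norm x)\<^sup>2" for x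
  proof -
    have "Re (?f x x) \<le> cmod (?f x x)" by (rule complex_Re_le_cmod)
    also have "\<dots> \<le> norm (A x) * norm x" unfolding A_inner_def by (rule cinner_cs)
    also have "\<dots> \<le> KA * norm x * norm x" using KA by (simp add: mult_right_mono)
    finally show ?thesis by (simp add: power2_eq_square mult.assoc)
  qed
  define KT where "KT = KR * KS"
  have KT: "KT > 0" unfolding KT_def using KR KS by simp
  have reidT: "Re (?f (T x) (T x)) \<le> KT\<^sup>2 * Re (?f x x)" for x
    using reid[OF hf sym bT _ bf] KT unfolding KT_def by blast
  have Sbound: "(A_norm A (S x))\<^sup>2 \<le> KT * (A_norm A x)\<^sup>2" for x
  proof -
    have "(A_norm A (S x))\<^sup>2 = Re (?f (T x) x)" unfolding A_norm_sq[OF pA] key ..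
    also have "\<dots> \<le> cmod (?f (T x) x)" by (rule complex_Re_le_cmod)
    also have "\<dots> \<le> A_norm A (T x) * A_norm A x" by (rule A_cs[OF pA])
    also have "\<dots> \<le> (KT * A_norm A x) * A_norm A x"
    proof (intro mult_right_mono Ann)
      have "(A_norm A (T x))\<^sup>2 \<le> (KT * A_norm A x)\<^sup>2"
        unfolding A_norm_sq[OF pA] power_mult_distrib using reidT by simp
      then show "A_norm A (T x) \<le> KT * A_norm A x"
        using KT Ann by (meson power2_le_imp_le mult_nonneg_nonneg less_imp_le)
    qed
    finally show ?thesis by (simp add: power2_eq_square mult.assoc)
  qed
  define Sp where "Sp = A_sphere A"
  have Sp: "z \<in> Sp \<longleftrightarrow> A_norm A z = 1" for z unfolding Sp_def A_sphere_def by simp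
  obtain z0 where z0: "z0 \<in> Sp" using False Sp_def by blast
  define M where "M = A_opnorm A S"
  have M_def': "M = (SUP z\<in>Sp. A_norm A (S z))"
    unfolding M_def A_opnorm_def A_sup_def Sp_def using False by simp
  have Sz1: "A_norm A (S z) \<le> sqrt KT" if "z \<in> Sp" for z
  proof -
    have "(A_norm A (S z))\<^sup>2 \<le> KT" using Sbound[of z] that Sp by simp
    then show ?thesis by (metis Ann real_sqrt_le_mono real_sqrt_abs abs_of_nonneg)
  qed
  have bddS: "bdd_above ((\<lambda>z. A_norm A (S z)) ` Sp)" using Sz1 by (intro bdd_aboveI2) blast
  have SzM: "A_norm A (S z) \<le> M" if "z \<in> Sp" for z
    unfolding M_def' using bddS that by (rule cSUP_upper2) simp
  have M0: "M \<ge> 0" using SzM[OF z0] Ann order_trans by blast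
  have genM: "A_norm A (S w) \<le> M * A_norm A w" for w
  proof (cases "A_norm A w = 0")
    case True
    then have "(A_norm A (S w))\<^sup>2 \<le> 0" using Sbound[of w] by simp
    then show ?thesis using True by simp
  next
    case False
    define a where "a = A_norm A w"
    have a: "a > 0" using False Ann a_def by (metis less_eq_real_def)
    define z where "z = scaleR (1/a) w"
    have "A_norm A z = 1" unfolding z_def A_norm_scaleR[OF pA] a_def[symmetric] using a by simp
    then have "A_norm A (S z) \<le> M" using SzM Sp by blast
    moreover have "A_norm A (S z) = A_norm A (S w) / a"
      unfolding z_def clinear_scaleR[OF clS] A_norm_scaleR[OF pA] using a by simp
    ultimately show ?thesis using a a_def by (simp add: divide_le_eq)
  qed
  define g where "g z = sqrt ((cmod (?f (S z) z))\<^sup>2 + (A_norm A (S z)) ^ 4)" for z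
  have gb: "g z \<le> sqrt (M\<^sup>2 + M ^ 4)" if "z \<in> Sp" for z
  proof -
    have "cmod (?f (S z) z) \<le> M"
      using A_cs[OF pA, of "S z" z] SzM[OF that] that Sp by simp
    then have "(cmod (?f (S z) z))\<^sup>2 \<le> M\<^sup>2" by (intro power_mono) auto
    moreover have "(A_norm A (S z)) ^ 4 \<le> M ^ 4" using SzM[OF that] Ann by (intro power_mono) auto
    ultimately show ?thesis unfolding g_def by simp
  qed
  have dw: "A_dw_radius A S = (SUP z\<in>Sp. g z)"
    unfolding A_dw_radius_def A_sup_def Sp_def g_def using False by simp
  have dw_le: "A_dw_radius A S \<le> sqrt (M\<^sup>2 + M ^ 4)"
    unfolding dw using z0 gb by (intro cSUP_least) auto
  have dw_ge: "A_dw_radius A S \<ge> 0"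
  proof -
    have "bdd_above (g ` Sp)" using gb by (intro bdd_aboveI2) blast
    then have "g z0 \<le> A_dw_radius A S" unfolding dw using z0 by (rule cSUP_upper2) simp
    then show ?thesis unfolding g_def by (meson order_trans real_sqrt_ge_zero add_nonneg_nonneg zero_le_power2 zero_le_power norm_ge_zero Ann)
  qed
  have dw2: "(A_dw_radius A S)\<^sup>2 \<le> M\<^sup>2 + M ^ 4"
  proof -
    have "(A_dw_radius A S)\<^sup>2 \<le> (sqrt (M\<^sup>2 + M ^ 4))\<^sup>2" using dw_le dw_ge by (intro power_mono) auto
    then show ?thesis by simp
  qed
  have cmod_self: "cmod (?f x x) = (A_norm A x)\<^sup>2" for x
    using hf_self[OF hf, of x] hf_pos[OF hf, of x] A_norm_sq[OF pA, of x] by (metis norm_of_real abs_of_nonneg)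
  have v1: "cmod (?f ((A_adj A S \<circ> S) z) z) \<le> M\<^sup>2" if "z \<in> Sp" for z
  proof -
    have "A ((A_adj A S \<circ> S) z) = A (R (S z))"
      unfolding A_adj_def comp_apply ARw[symmetric] by (rule mp_inverse_range[OF bA])
    then have "?f ((A_adj A S \<circ> S) z) z = ?f (T z) z" unfolding A_inner_def T_def by simp
    also have "\<dots> = ?f (S z) (S z)" by (rule key)
    finally have "cmod (?f ((A_adj A S \<circ> S) z) z) = (A_norm A (S z))\<^sup>2" using cmod_self by simp
    also have "\<dots> \<le> M\<^sup>2" using SzM[OF that] Ann by (intro power_mono) auto
    finally show ?thesis .
  qed
  have v2: "cmod (?f ((S \<circ> A_adj A S) z) z) \<le> M\<^sup>2" if "z \<in> Sp" for z
  proof -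
    define y where "y = A_adj A S z"
    have Ay: "A y = adjoint S (A z)"
      unfolding y_def A_adj_def comp_apply ARw[symmetric] by (rule mp_inverse_range[OF bA])
    have "?f (S y) z = cnj (cinner (A z) (S y))" unfolding A_inner_def[symmetric] by (rule hf_herm[OF hf])
    also have "cinner (A z) (S y) = cnj (cinner y (adjoint S (A z)))"
      by (metis cinner_commute adjoint_prop[OF bS])
    also have "\<dots> = ?f y y" unfolding Ay[symmetric] A_inner_def by (metis cinner_commute)
    finally have e: "cmod (?f (S y) z) = (A_norm A y)\<^sup>2" using cmod_self by simp
    have "cmod (?f (S y) z) \<le> A_norm A (S y) * A_norm A z" by (rule A_cs[OF pA])
    also have "\<dots> \<le> M * A_norm A y" using genM[of y] that Sp by simp
    finally have "A_norm A y * A_norm A y \<le> M * A_norm A y" unfolding e power2_eq_square .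
    then have "A_norm A y \<le> M" using M0 Ann[of y]
      by (metis mult_le_cancel_right less_eq_real_def not_less)
    then have "(A_norm A y)\<^sup>2 \<le> M\<^sup>2" using Ann by (intro power_mono) auto
    then show ?thesis using e y_def by simp
  qed
  have craw: "0 \<le> A_crawford A X \<and> A_crawford A X \<le> M\<^sup>2"
    if v: "\<And>z. z \<in> Sp \<Longrightarrow> cmod (?f (X z) z) \<le> M\<^sup>2" for X
  proof -
    have c: "A_crawford A X = (INF z\<in>Sp. cmod (?f (X z) z))"
      unfolding A_crawford_def A_inf_def Sp_def using False by simp
    have bdd: "bdd_below ((\<lambda>z. cmod (?f (X z) z)) ` Sp)" by (intro bdd_belowI2[of _ 0]) simp
    have "0 \<le> A_crawford A X" unfolding c using z0 by (intro cINF_greatest) auto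
    moreover have "A_crawford A X \<le> M\<^sup>2" unfolding c using bdd z0 v[OF z0] by (rule cINF_lower2)
    ultimately show ?thesis by simp
  qed
  define c1 where "c1 = A_crawford A (A_adj A S \<circ> S)"
  define c2 where "c2 = A_crawford A (S \<circ> A_adj A S)"
  have c1: "0 \<le> c1" "c1 \<le> M\<^sup>2" using craw[where X="A_adj A S \<circ> S", OF v1] c1_def by auto
  have c2: "0 \<le> c2" "c2 \<le> M\<^sup>2" using craw[where X="S \<circ> A_adj A S", OF v2] c2_def by auto
  have "c1 * c2 \<le> M\<^sup>2 * M\<^sup>2" using c1 c2 by (intro mult_mono) auto
  then have "sqrt (c1 * c2) \<le> sqrt (M\<^sup>2 * M\<^sup>2)" by (rule real_sqrt_le_mono)
  also have "\<dots> = M\<^sup>2" by (metis power2_eq_square real_sqrt_abs abs_power2)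
  finally have sq: "sqrt (c1 * c2) \<le> M\<^sup>2" .
  show ?thesis using dw2 sq unfolding M_def[symmetric] c1_def[symmetric] c2_def[symmetric] by simp
qed

end
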